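(* For every $L>0$, $n\ge1$ and $w\in\mathbb{R}$, $\mathcal{L}_{\mathrm{sig}}(w;D(\mathcal{F}^{+}_L))\ge\frac12\,\mathcal{L}_{\mathrm{sig}}(w;D(\mathcal{F}^{\mathrm{aff}}_L))$.
   Context: $(z)_+=\max(z,0)$; $\mathcal{U}^d$ is the uniform distribution on $\mathbb{S}^{d-1}$. $D(\mathcal{F}^{\mathrm{aff}}_L)$ is the distribution of $f(\mathbf{x})=l\,\mathbf{w}^\top\mathbf{x}+b$ with $\mathbf{w}\sim\mathcal{U}^d$, $l,b$ i.i.d. $\mathrm{Unif}([-L,L])$; $D(\mathcal{F}^+_L)$ is the distribution of $f(\mathbf{x})=l_1(\mathbf{w}^\top\mathbf{x})_++l_2(-\mathbf{w}^\top\mathbf{x})_++b$ with $\mathbf{w}\sim\mathcal{U}^d$ and $l_1,l_2,b$ i.i.d. $\mathrm{Unif}([-L,L])$ (all independent). For a task distribution $D$ and $w\in\mathbb{R}$, the signal term is $\mathcal{L}_{\mathrm{sig}}(w;D)=\mathbb{E}\Big[\Big(\frac{\sum_{i=1}^n(f(\mathbf{x}_i)-f(\mathbf{x}_{n+1}))e^{-w\|\mathbf{x}_i-\mathbf{x}_{n+1}\|^2}}{\sum_{j=1}^n e^{-w\|\mathbf{x}_j-\mathbf{x}_{n+1}\|^2}}\Big)^2\Big]$, where $f\sim D$ and $\mathbf{x}_1,\dots,\mathbf{x}_{n+1}$ i.i.d. $\sim\mathcal{U}^d$ independent of $f$. *)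

theory Defs
  imports "HOL-Probability.Probability"
begin

(* Uniform distribution U^d on the unit sphere S^{d-1} of real^'d (d = CARD('d)):
   the normalized (cone) surface measure, i.e. the law of x/|x| for x uniform on the unit ball. *)
definition sphere_unif :: "(real ^ 'd) measure" where
  "sphere_unif = distr (uniform_measure lborel (ball 0 1)) borel (\<lambda>x. x /\<^sub>R norm x)"

definition interval_unif :: "real \<Rightarrow> real measure" where
  "interval_unif L = uniform_measure lborel {-L..L}"

definition aff_params :: "real \<Rightarrow> ((real ^ 'd) \<times> real \<times> real) measure" where
  "aff_params L = sphere_unif \<Otimes>\<^sub>M (interval_unif L \<Otimes>\<^sub>M interval_unif L)"

definition aff_fun :: "(real ^ 'd) \<times> real \<times> real \<Rightarrow> real ^ 'd \<Rightarrow> real" where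
  "aff_fun p x = (case p of (v, l, b) \<Rightarrow> l * (v \<bullet> x) + b)"

definition plus_params :: "real \<Rightarrow> ((real ^ 'd) \<times> real \<times> real \<times> real) measure" where
  "plus_params L = sphere_unif \<Otimes>\<^sub>M (interval_unif L \<Otimes>\<^sub>M (interval_unif L \<Otimes>\<^sub>M interval_unif L))"

definition plus_fun :: "(real ^ 'd) \<times> real \<times> real \<times> real \<Rightarrow> real ^ 'd \<Rightarrow> real" where
  "plus_fun p x = (case p of (v, l1, l2, b) \<Rightarrow>
      l1 * max (v \<bullet> x) 0 + l2 * max (- (v \<bullet> x)) 0 + b)"

(* Signal term L_sig(w; D), where D is the law of F p with p ~ P;
   xs i for i in {1..n+1} are i.i.d. uniform on the sphere, independent of p. *)
definition sig_loss :: "nat \<Rightarrow> real \<Rightarrow> 'p measure \<Rightarrow> ('p \<Rightarrow> real ^ 'd \<Rightarrow> real) \<Rightarrow> real" where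
  "sig_loss n w P F =
     (\<integral>(p, xs). ((\<Sum>i=1..n. (F p (xs i) - F p (xs (Suc n))) * exp (- w * (norm (xs i - xs (Suc n)))\<^sup>2))
                   / (\<Sum>j=1..n. exp (- w * (norm (xs j - xs (Suc n)))\<^sup>2)))\<^sup>2
      \<partial>(P \<Otimes>\<^sub>M (\<Pi>\<^sub>M i\<in>{1..Suc n}. (sphere_unif :: (real ^ 'd) measure))))"

end

theory Submission imports Defs "HOL-Analysis.Ball_Volume" begin
lemma ball_pos: "emeasure (lborel :: (real^'d) measure) (ball 0 1) \<noteq> 0"
proof -
  have "unit_ball_vol (real CARD('d)) > 0" by (rule unit_ball_vol_pos) simp
  then show ?thesis by (simp add: emeasure_ball del: unit_ball_vol_pos)
qed
lemma sphere_prob: "prob_space (sphere_unif :: (real^'d) measure)"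
  unfolding sphere_unif_def
  apply (rule prob_space.prob_space_distr)
   apply (rule prob_space_uniform_measure)
  using ball_pos emeasure_lborel_ball_finite[of "0::real^'d" 1] apply auto
  done
lemma interval_prob: "L > 0 \<Longrightarrow> prob_space (interval_unif L)"
  unfolding interval_unif_def
  by (rule prob_space_uniform_measure) auto
lemma sphere_AE: "AE x in (sphere_unif :: (real^'d) measure). norm x \<le> 1"
  unfolding sphere_unif_def
  apply (subst AE_distr_iff)
    apply auto
  apply (rule AE_I2)
  subgoal for x by (cases "x = 0") auto
  done
lemma interval_AE: "AE x in interval_unif L. \<bar>x\<bar> \<le> L"
  unfolding interval_unif_def
  apply (rule AE_uniform_measureI)
  apply auto
  done
lemma sets_sphere[measurable_cong]: "sets (sphere_unif :: (real^'d) measure) = sets borel"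
  unfolding sphere_unif_def by simp
lemma sets_interval[measurable_cong]: "sets (interval_unif L) = sets borel"
  unfolding interval_unif_def by simp
lemma poly_hasint:
  fixes a b c L :: real assumes "L > 0"
  shows "((\<lambda>l. a + b*l + c*l^2) has_integral (2*a*L + 2*c*L^3/3)) {-L..L}"
proof -
  have "((\<lambda>l. a + b*l + c*l^2) has_integral
     ((a*L + b*L^2/2 + c*L^3/3) - (a*(-L) + b*(-L)^2/2 + c*(-L)^3/3))) {-L..L}"
    apply (rule fundamental_theorem_of_calculus)
    using assms apply simp
    apply (auto intro!: derivative_eq_intros simp: has_real_derivative_iff_has_vector_derivative[symmetric])
    done
  moreover have "((a*L + b*L^2/2 + c*L^3/3) - (a*(-L) + b*(-L)^2/2 + c*(-L)^3/3)) = 2*a*L + 2*c*L^3/3"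
    by (simp add: power3_eq_cube power2_eq_square algebra_simps)
  ultimately show ?thesis by (simp only:)
qed

lemma poly_int:
  fixes a b c L :: real assumes L: "L > 0" and nn: "\<And>l. 0 \<le> a + b*l + c*l^2"
  shows "(\<integral>\<^sup>+ l. ennreal (a + b*l + c*l^2) \<partial>interval_unif L) = ennreal (a + c*L^2/3)"
proof -
  have "(\<integral>\<^sup>+ l. ennreal (a + b*l + c*l^2) \<partial>interval_unif L)
      = (\<integral>\<^sup>+ l. ennreal (a + b*l + c*l^2) * indicator {-L..L} l \<partial>lborel) / emeasure lborel {-L..L}"
    unfolding interval_unif_def by (rule nn_integral_uniform_measure) auto
  also have "(\<integral>\<^sup>+ l. ennreal (a + b*l + c*l^2) * indicator {-L..L} l \<partial>lborel) = ennreal (2*a*L + 2*c*L^3/3)"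
    by (rule nn_integral_has_integral_lebesgue'[OF nn poly_hasint[OF L]])
  also have "emeasure lborel {-L..L} = ennreal (2*L)" using L by simp
  also have "ennreal (2*a*L + 2*c*L^3/3) / ennreal (2*L) = ennreal ((2*a*L + 2*c*L^3/3) / (2*L))"
    apply (rule divide_ennreal)
    using has_integral_nonneg[OF poly_hasint[OF L, of a b c]] nn L by auto
  also have "(2*a*L + 2*c*L^3/3) / (2*L) = a + c*L^2/3"
    using L by (simp add: field_simps power2_eq_square power3_eq_cube)
  finally show ?thesis .
qed
definition Rf :: "nat \<Rightarrow> real \<Rightarrow> (real^'d \<Rightarrow> real) \<Rightarrow> (nat \<Rightarrow> real^'d) \<Rightarrow> real" where
 "Rf n w g xs = (\<Sum>i=1..n. (g (xs i) - g (xs (Suc n))) * exp (- w * (norm (xs i - xs (Suc n)))\<^sup>2))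
                   / (\<Sum>j=1..n. exp (- w * (norm (xs j - xs (Suc n)))\<^sup>2))"

lemma meas_plus: "(\<lambda>(p, xs). ennreal ((Rf n w (plus_fun p) xs)\<^sup>2))
   \<in> borel_measurable (plus_params L \<Otimes>\<^sub>M (\<Pi>\<^sub>M i\<in>{1..Suc n}. (sphere_unif :: (real ^ 'd) measure)))"
  unfolding Rf_def plus_fun_def plus_params_def
  by measurable
lemma fub:
  assumes S: "sigma_finite_measure S" and T: "sigma_finite_measure T" and X: "sigma_finite_measure X"
    and G[measurable]: "G \<in> borel_measurable ((S \<Otimes>\<^sub>M T) \<Otimes>\<^sub>M X)"
  shows "(\<integral>\<^sup>+z. G z \<partial>((S \<Otimes>\<^sub>M T) \<Otimes>\<^sub>M X)) = (\<integral>\<^sup>+v. \<integral>\<^sup>+xs. \<integral>\<^sup>+p. G ((v,p),xs) \<partial>T \<partial>X \<partial>S)"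
proof -
  interpret S: sigma_finite_measure S by fact
  interpret T: sigma_finite_measure T by fact
  interpret X: sigma_finite_measure X by fact
  interpret TX: pair_sigma_finite T X by unfold_locales
  have "(\<integral>\<^sup>+z. G z \<partial>((S \<Otimes>\<^sub>M T) \<Otimes>\<^sub>M X)) = (\<integral>\<^sup>+y. \<integral>\<^sup>+xs. G (y,xs) \<partial>X \<partial>(S \<Otimes>\<^sub>M T))"
    by (rule X.nn_integral_fst[symmetric]) simp
  also have "\<dots> = (\<integral>\<^sup>+v. \<integral>\<^sup>+p. \<integral>\<^sup>+xs. G ((v,p),xs) \<partial>X \<partial>T \<partial>S)"
    by (rule T.nn_integral_fst[symmetric, where f="\<lambda>y. \<integral>\<^sup>+xs. G (y,xs) \<partial>X", simplified]) measurable
  also have "\<dots> = (\<integral>\<^sup>+v. \<integral>\<^sup>+xs. \<integral>\<^sup>+p. G ((v,p),xs) \<partial>T \<partial>X \<partial>S)"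
  proof (rule nn_integral_cong)
    fix v assume v: "v \<in> space S"
    show "(\<integral>\<^sup>+p. \<integral>\<^sup>+xs. G ((v,p),xs) \<partial>X \<partial>T) = (\<integral>\<^sup>+xs. \<integral>\<^sup>+p. G ((v,p),xs) \<partial>T \<partial>X)"
      by (rule TX.Fubini[where f="\<lambda>(p,xs). G ((v,p),xs)", simplified, symmetric]) (use v in measurable)
  qed
  finally show ?thesis .
qed

lemma inner_aff:
  assumes L: "L > 0"
  shows "(\<integral>\<^sup>+p. ennreal ((fst p * A)\<^sup>2) \<partial>(interval_unif L \<Otimes>\<^sub>M interval_unif L)) = ennreal (L\<^sup>2/3 * A\<^sup>2)"
proof -
  interpret I: prob_space "interval_unif L" using interval_prob[OF L] .
  have "(\<integral>\<^sup>+p. ennreal ((fst p * A)\<^sup>2) \<partial>(interval_unif L \<Otimes>\<^sub>M interval_unif L))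
     = (\<integral>\<^sup>+l. \<integral>\<^sup>+b. ennreal ((fst (l,b) * A)\<^sup>2) \<partial>interval_unif L \<partial>interval_unif L)"
    by (rule I.nn_integral_fst[symmetric]) measurable
  also have "\<dots> = (\<integral>\<^sup>+l. ennreal (0 + 0*l + A\<^sup>2*l\<^sup>2) \<partial>interval_unif L)"
    by (auto intro!: nn_integral_cong simp: I.emeasure_space_1 power_mult_distrib mult.commute)
  also have "\<dots> = ennreal (L\<^sup>2/3 * A\<^sup>2)"
    by (subst poly_int[OF L]) auto
  finally show ?thesis .
qed

lemma inner_plus:
  assumes L: "L > 0"
  shows "(\<integral>\<^sup>+p. ennreal ((fst p * P + fst (snd p) * Q)\<^sup>2) \<partial>(interval_unif L \<Otimes>\<^sub>M (interval_unif L \<Otimes>\<^sub>M interval_unif L)))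
     = ennreal (L\<^sup>2/3 * (P\<^sup>2 + Q\<^sup>2))"
proof -
  interpret I: prob_space "interval_unif L" using interval_prob[OF L] .
  interpret I2: prob_space "interval_unif L \<Otimes>\<^sub>M interval_unif L"
    by (rule prob_space_pair) (use interval_prob[OF L] in auto)
  have "(\<integral>\<^sup>+p. ennreal ((fst p * P + fst (snd p) * Q)\<^sup>2) \<partial>(interval_unif L \<Otimes>\<^sub>M (interval_unif L \<Otimes>\<^sub>M interval_unif L)))
     = (\<integral>\<^sup>+l1. \<integral>\<^sup>+q. ennreal ((fst (l1,q) * P + fst (snd (l1,q)) * Q)\<^sup>2) \<partial>(interval_unif L \<Otimes>\<^sub>M interval_unif L) \<partial>interval_unif L)"
    by (rule I2.nn_integral_fst[symmetric]) measurable
  also have "\<dots> = (\<integral>\<^sup>+l1. \<integral>\<^sup>+l2. \<integral>\<^sup>+b. ennreal ((l1 * P + fst (l2,b) * Q)\<^sup>2) \<partial>interval_unif L \<partial>interval_unif L \<partial>interval_unif L)"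
    apply (rule nn_integral_cong)
    apply simp
    apply (rule I.nn_integral_fst[symmetric, where f="\<lambda>q. ennreal ((_ * P + fst q * Q)\<^sup>2)", simplified])
    apply measurable
    done
  also have "\<dots> = (\<integral>\<^sup>+l1. \<integral>\<^sup>+l2. ennreal ((l1*P)\<^sup>2 + (2*l1*P*Q)*l2 + Q\<^sup>2*l2\<^sup>2) \<partial>interval_unif L \<partial>interval_unif L)"
    by (auto intro!: nn_integral_cong simp: I.emeasure_space_1 power2_eq_square algebra_simps)
  also have "\<dots> = (\<integral>\<^sup>+l1. ennreal (Q\<^sup>2*L\<^sup>2/3 + 0*l1 + P\<^sup>2*l1\<^sup>2) \<partial>interval_unif L)"
  proof (rule nn_integral_cong)
    fix l1
    have "\<And>l2. (l1*P)\<^sup>2 + (2*l1*P*Q)*l2 + Q\<^sup>2*l2\<^sup>2 = (l1*P + l2*Q)\<^sup>2"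
      by (simp add: power2_eq_square algebra_simps)
    then show "(\<integral>\<^sup>+l2. ennreal ((l1*P)\<^sup>2 + (2*l1*P*Q)*l2 + Q\<^sup>2*l2\<^sup>2) \<partial>interval_unif L) = ennreal (Q\<^sup>2*L\<^sup>2/3 + 0*l1 + P\<^sup>2*l1\<^sup>2)"
      by (subst poly_int[OF L]) (auto simp: power_mult_distrib algebra_simps)
  qed
  also have "\<dots> = ennreal (L\<^sup>2/3 * (P\<^sup>2 + Q\<^sup>2))"
    by (subst poly_int[OF L]) (auto simp: algebra_simps)
  finally show ?thesis .
qed
lemma Rf_lin: "Rf n w (\<lambda>x. \<alpha> * g1 x + \<beta> * g2 x + \<gamma>) xs = \<alpha> * Rf n w g1 xs + \<beta> * Rf n w g2 xs"
proof -
  define e where "e i = exp (- w * (norm (xs i - xs (Suc n)))\<^sup>2)" for i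
  have "(\<Sum>i=1..n. ((\<alpha> * g1 (xs i) + \<beta> * g2 (xs i) + \<gamma>) - (\<alpha> * g1 (xs (Suc n)) + \<beta> * g2 (xs (Suc n)) + \<gamma>)) * e i)
     = \<alpha> * (\<Sum>i=1..n. (g1 (xs i) - g1 (xs (Suc n))) * e i) + \<beta> * (\<Sum>i=1..n. (g2 (xs i) - g2 (xs (Suc n))) * e i)"
    by (simp add: sum_distrib_left sum.distrib[symmetric] algebra_simps)
  then show ?thesis unfolding Rf_def e_def[symmetric]
    by (simp add: add_divide_distrib)
qed

lemma Rf_bound:
  assumes n: "n \<ge> 1" and g: "\<And>i. i \<in> {1..Suc n} \<Longrightarrow> \<bar>g (xs i)\<bar> \<le> 1"
  shows "\<bar>Rf n w g xs\<bar> \<le> 2"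
proof -
  define e where "e i = exp (- w * (norm (xs i - xs (Suc n)))\<^sup>2)" for i
  have D: "(\<Sum>j=1..n. e j) > 0" using n by (intro sum_pos) (auto simp: e_def)
  have "\<bar>\<Sum>i=1..n. (g (xs i) - g (xs (Suc n))) * e i\<bar> \<le> (\<Sum>i=1..n. \<bar>(g (xs i) - g (xs (Suc n))) * e i\<bar>)"
    by (rule sum_abs)
  also have "\<dots> \<le> (\<Sum>i=1..n. 2 * e i)"
  proof (rule sum_mono)
    fix i assume i: "i \<in> {1..n}"
    have "\<bar>g (xs i) - g (xs (Suc n))\<bar> \<le> 2" using g[of i] g[of "Suc n"] i by auto
    then show "\<bar>(g (xs i) - g (xs (Suc n))) * e i\<bar> \<le> 2 * e i"
      by (simp add: abs_mult e_def mult_right_mono)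
  qed
  also have "\<dots> = 2 * (\<Sum>j=1..n. e j)" by (simp add: sum_distrib_left)
  finally show ?thesis unfolding Rf_def e_def[symmetric] using D
    by (simp add: abs_div divide_le_eq)
qed

lemma sig_loss_Rf: "sig_loss n w P F = (\<integral>(p, xs). (Rf n w (F p) xs)\<^sup>2 \<partial>(P \<Otimes>\<^sub>M (\<Pi>\<^sub>M i\<in>{1..Suc n}. (sphere_unif :: (real ^ 'd) measure))))"
  by (simp add: sig_loss_def Rf_def)
theorem mainTheorem10:
  fixes L w :: real and n :: nat
  assumes "L > 0" and "n \<ge> 1"
  shows "sig_loss n w (plus_params L) (plus_fun :: (real ^ 'd) \<times> real \<times> real \<times> real \<Rightarrow> real ^ 'd \<Rightarrow> real)
         \<ge> 1 / 2 * sig_loss n w (aff_params L) (aff_fun :: (real ^ 'd) \<times> real \<times> real \<Rightarrow> real ^ 'd \<Rightarrow> real)"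
proof -
  note L = \<open>L > 0\<close>
  define X where "X = (\<Pi>\<^sub>M i\<in>{1..Suc n}. (sphere_unif :: (real ^ 'd) measure))"
  define S where "S = (sphere_unif :: (real ^ 'd) measure)"
  define I where "I = interval_unif L"
  define P where "P v xs = Rf n w (\<lambda>x. max (v \<bullet> x) 0) xs" for v :: "real^'d" and xs
  define Q where "Q v xs = Rf n w (\<lambda>x. max (- (v \<bullet> x)) 0) xs" for v :: "real^'d" and xs
  define c where "c = L\<^sup>2/3"
  interpret S: prob_space S unfolding S_def by (rule sphere_prob)
  interpret I: prob_space I unfolding I_def by (rule interval_prob[OF L])
  interpret X: prob_space X unfolding X_def by (rule prob_space_PiM) (rule sphere_prob)
  interpret I2: prob_space "I \<Otimes>\<^sub>M I" by (rule prob_space_pair) (use I.prob_space_axioms in auto)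
  interpret I3: prob_space "I \<Otimes>\<^sub>M (I \<Otimes>\<^sub>M I)" by (rule prob_space_pair) (use I.prob_space_axioms I2.prob_space_axioms in auto)
  have sI[measurable_cong]: "sets I = sets borel" unfolding I_def by (rule sets_interval)
  have sS[measurable_cong]: "sets S = sets borel" unfolding S_def by (rule sets_sphere)

  have plus_eq: "Rf n w (plus_fun (v, p)) xs = fst p * P v xs + fst (snd p) * Q v xs" for v p xs
  proof -
    obtain l1 l2 b where p: "p = (l1, l2, b)" by (cases p) auto
    have "plus_fun (v, p) = (\<lambda>x. l1 * max (v \<bullet> x) 0 + l2 * max (- (v \<bullet> x)) 0 + b)"
      by (rule ext) (simp add: plus_fun_def p)
    then show ?thesis by (simp add: Rf_lin P_def Q_def p)
  qed
  have aff_eq: "Rf n w (aff_fun (v, p)) xs = fst p * (P v xs - Q v xs)" for v p xs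
  proof -
    obtain l b where p: "p = (l, b)" by (cases p) auto
    have "aff_fun (v, p) = (\<lambda>x. l * max (v \<bullet> x) 0 + (-l) * max (- (v \<bullet> x)) 0 + b)"
      by (rule ext) (simp add: aff_fun_def p max_def)
    then have "Rf n w (aff_fun (v, p)) xs = l * P v xs + (-l) * Q v xs" by (simp only: Rf_lin P_def Q_def)
    then show ?thesis by (simp add: p algebra_simps)
  qed

  have hP: "sig_loss n w (plus_params L) (plus_fun :: (real ^ 'd) \<times> real \<times> real \<times> real \<Rightarrow> real ^ 'd \<Rightarrow> real)
      = enn2real (\<integral>\<^sup>+v. \<integral>\<^sup>+xs. ennreal (c * ((P v xs)\<^sup>2 + (Q v xs)\<^sup>2)) \<partial>X \<partial>S)"
  proof -
    have "sig_loss n w (plus_params L) (plus_fun :: (real ^ 'd) \<times> real \<times> real \<times> real \<Rightarrow> real ^ 'd \<Rightarrow> real)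
       = enn2real (\<integral>\<^sup>+z. ennreal ((\<lambda>(p, xs). (Rf n w (plus_fun p) xs)\<^sup>2) z) \<partial>((S \<Otimes>\<^sub>M (I \<Otimes>\<^sub>M (I \<Otimes>\<^sub>M I))) \<Otimes>\<^sub>M X))"
      unfolding sig_loss_Rf
      apply (subst integral_eq_nn_integral)
      unfolding X_def S_def I_def plus_params_def Rf_def plus_fun_def
        apply measurable
      apply auto
      done
    also have "\<dots> = (enn2real (\<integral>\<^sup>+v. \<integral>\<^sup>+xs. \<integral>\<^sup>+p. ennreal ((Rf n w (plus_fun (v,p)) xs)\<^sup>2) \<partial>(I \<Otimes>\<^sub>M (I \<Otimes>\<^sub>M I)) \<partial>X \<partial>S))"
      apply (subst fub)
      using S.sigma_finite_measure_axioms I3.sigma_finite_measure_axioms X.sigma_finite_measure_axioms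
         apply auto[3]
      unfolding X_def S_def I_def plus_params_def Rf_def plus_fun_def
       apply measurable
      done
    also have "\<dots> = enn2real (\<integral>\<^sup>+v. \<integral>\<^sup>+xs. ennreal (c * ((P v xs)\<^sup>2 + (Q v xs)\<^sup>2)) \<partial>X \<partial>S)"
      unfolding plus_eq c_def I_def using inner_plus[OF L] by simp
    finally show ?thesis .
  qed
  have hA: "sig_loss n w (aff_params L) (aff_fun :: (real ^ 'd) \<times> real \<times> real \<Rightarrow> real ^ 'd \<Rightarrow> real)
      = enn2real (\<integral>\<^sup>+v. \<integral>\<^sup>+xs. ennreal (c * (P v xs - Q v xs)\<^sup>2) \<partial>X \<partial>S)"
  proof -
    have "sig_loss n w (aff_params L) (aff_fun :: (real ^ 'd) \<times> real \<times> real \<Rightarrow> real ^ 'd \<Rightarrow> real)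
       = enn2real (\<integral>\<^sup>+z. ennreal ((\<lambda>(p, xs). (Rf n w (aff_fun p) xs)\<^sup>2) z) \<partial>((S \<Otimes>\<^sub>M (I \<Otimes>\<^sub>M I)) \<Otimes>\<^sub>M X))"
      unfolding sig_loss_Rf
      apply (subst integral_eq_nn_integral)
      unfolding X_def S_def I_def aff_params_def Rf_def aff_fun_def
        apply measurable
      apply auto
      done
    also have "\<dots> = (enn2real (\<integral>\<^sup>+v. \<integral>\<^sup>+xs. \<integral>\<^sup>+p. ennreal ((Rf n w (aff_fun (v,p)) xs)\<^sup>2) \<partial>(I \<Otimes>\<^sub>M I) \<partial>X \<partial>S))"
      apply (subst fub)
      using S.sigma_finite_measure_axioms I2.sigma_finite_measure_axioms X.sigma_finite_measure_axioms
         apply auto[3]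
      unfolding X_def S_def I_def aff_params_def Rf_def aff_fun_def
       apply measurable
      done
    also have "\<dots> = enn2real (\<integral>\<^sup>+v. \<integral>\<^sup>+xs. ennreal (c * (P v xs - Q v xs)\<^sup>2) \<partial>X \<partial>S)"
      unfolding aff_eq c_def I_def using inner_aff[OF L] by simp
    finally show ?thesis .
  qed
  define A where "A = (\<integral>\<^sup>+v. \<integral>\<^sup>+xs. ennreal (c * (P v xs - Q v xs)\<^sup>2) \<partial>X \<partial>S)"
  define B where "B = (\<integral>\<^sup>+v. \<integral>\<^sup>+xs. ennreal (c * ((P v xs)\<^sup>2 + (Q v xs)\<^sup>2)) \<partial>X \<partial>S)"
  have mB[measurable]: "(\<lambda>v. \<integral>\<^sup>+xs. ennreal (c * ((P v xs)\<^sup>2 + (Q v xs)\<^sup>2)) \<partial>X) \<in> borel_measurable S"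
    apply (rule X.borel_measurable_nn_integral)
    unfolding X_def S_def P_def Q_def Rf_def by measurable
  have c0: "c \<ge> 0" unfolding c_def by simp
  have AB: "A \<le> 2 * B"
  proof -
    have "A \<le> (\<integral>\<^sup>+v. \<integral>\<^sup>+xs. 2 * ennreal (c * ((P v xs)\<^sup>2 + (Q v xs)\<^sup>2)) \<partial>X \<partial>S)"
      unfolding A_def
    proof (intro nn_integral_mono)
      fix v xs
      define p where "p = P v xs"
      define q where "q = Q v xs"
      have e: "2 * (p\<^sup>2 + q\<^sup>2) - (p - q)\<^sup>2 = (p + q)\<^sup>2" by (simp add: power2_eq_square algebra_simps)
      have "(p - q)\<^sup>2 \<le> 2 * (p\<^sup>2 + q\<^sup>2)" using e zero_le_power2[of "p+q"] by linarith
      then have "c * (p - q)\<^sup>2 \<le> 2 * (c * (p\<^sup>2 + q\<^sup>2))"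
        using mult_left_mono[OF _ c0] by (simp add: mult.left_commute)
      then have "ennreal (c * (p - q)\<^sup>2) \<le> ennreal (2 * (c * (p\<^sup>2 + q\<^sup>2)))"
        by (rule ennreal_leI)
      also have "\<dots> = 2 * ennreal (c * (p\<^sup>2 + q\<^sup>2))"
        using c0 by (simp add: ennreal_mult)
      finally show "ennreal (c * (P v xs - Q v xs)\<^sup>2) \<le> 2 * ennreal (c * ((P v xs)\<^sup>2 + (Q v xs)\<^sup>2))"
        unfolding p_def q_def .
    qed
    also have "\<dots> = 2 * B"
      unfolding B_def
      apply (subst nn_integral_cmult[symmetric])
       apply (rule mB)
      apply (rule nn_integral_cong)
      apply (subst nn_integral_cmult)
      unfolding X_def S_def P_def Q_def Rf_def
       apply measurable
      done
    finally show ?thesis .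
  qed
  have Bfin: "B < \<infinity>"
  proof -
    have AEv: "AE v in S. norm v \<le> 1" unfolding S_def by (rule sphere_AE)
    have AEx: "AE xs in X. \<forall>i\<in>{1..Suc n}. norm (xs i) \<le> 1"
    proof (rule AE_finite_allI)
      fix i assume i: "i \<in> {1..Suc n}"
      show "AE xs in X. norm (xs i) \<le> 1" unfolding X_def
        by (rule AE_PiM_component[where P="\<lambda>x. norm x \<le> 1", OF sphere_prob i sphere_AE])
    qed simp
    have "B \<le> (\<integral>\<^sup>+v. \<integral>\<^sup>+xs. ennreal (c * 8) \<partial>X \<partial>S)"
      unfolding B_def
    proof (rule nn_integral_mono_AE)
      show "AE v in S. (\<integral>\<^sup>+xs. ennreal (c * ((P v xs)\<^sup>2 + (Q v xs)\<^sup>2)) \<partial>X) \<le> (\<integral>\<^sup>+xs. ennreal (c * 8) \<partial>X)"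
        using AEv
      proof eventually_elim
        case (elim v)
        show ?case
        proof (rule nn_integral_mono_AE)
          show "AE xs in X. ennreal (c * ((P v xs)\<^sup>2 + (Q v xs)\<^sup>2)) \<le> ennreal (c * 8)"
            using AEx
          proof eventually_elim
            case (elim xs)
            have ip: "\<bar>v \<bullet> xs i\<bar> \<le> 1" if "i \<in> {1..Suc n}" for i
            proof -
              have "\<bar>v \<bullet> xs i\<bar> \<le> norm v * norm (xs i)" by (rule Cauchy_Schwarz_ineq2)
              also have "\<dots> \<le> 1 * 1" using elim that \<open>norm v \<le> 1\<close>
                by (intro mult_mono) auto
              finally show ?thesis by simp
            qed
            have "\<bar>P v xs\<bar> \<le> 2" unfolding P_def
              by (rule Rf_bound[OF \<open>n \<ge> 1\<close>]) (use ip in fastforce)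
            moreover have "\<bar>Q v xs\<bar> \<le> 2" unfolding Q_def
              by (rule Rf_bound[OF \<open>n \<ge> 1\<close>]) (use ip in fastforce)
            ultimately have "\<bar>P v xs\<bar>\<^sup>2 + \<bar>Q v xs\<bar>\<^sup>2 \<le> 2\<^sup>2 + 2\<^sup>2"
              by (intro add_mono power_mono) auto
            then have "(P v xs)\<^sup>2 + (Q v xs)\<^sup>2 \<le> 8" by simp
            then show ?case using c0 by (intro ennreal_leI mult_left_mono) auto
          qed
        qed
      qed
    qed
    also have "\<dots> = ennreal (c * 8)"
      by (simp add: X.emeasure_space_1 S.emeasure_space_1)
    finally show ?thesis by (simp add: le_less_trans)
  qed
  have "enn2real A \<le> enn2real (2 * B)"
    by (rule enn2real_mono[OF AB]) (use Bfin in \<open>simp add: ennreal_mult_less_top\<close>)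
  also have "\<dots> = 2 * enn2real B" by (simp add: enn2real_mult)
  finally have "1/2 * enn2real A \<le> enn2real B" by simp
  then show ?thesis unfolding hP hA A_def[symmetric] B_def[symmetric] .
qed
end
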